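(* Let $b>0$. Then there exists $g\in\tilde{\mathcal S}\cap\mathcal H^2_-$ such that the function $s\mapsto e^{i\sqrt{s}\,b}g(s)$ does not belong to $\tilde{\mathcal S}\cap\mathcal H^2_-$, where the branch of $\sqrt{s}$ is taken with $-\pi\leq\operatorname{Arg}s<\pi$.
   Context: Hardy classes: a complex function $f$ analytic in the open lower half-plane $\mathbb C_-$ belongs to $\mathcal H^2_-$ if $x\mapsto f(x+iy)$ is square integrable for every $y<0$ and $\sup_{y<0}\int_{-\infty}^{\infty}|f(x+iy)|^2\,dx<\infty$ (equivalently, $\sup_{-\pi<\phi<0}\int_0^\infty|f(re^{i\phi})|^2dr<\infty$); $\mathcal H^2_+$ is defined analogously with the open upper half-plane. Such functions are identified with their pointwise boundary values on the real axis. The space $\tilde{\mathcal S}$ is the space of $C^\infty$ functions $f$ on $\mathbb R$ such that for every $N=0,1,2,\dots$, $$\|f\|_N=\sup_{s\in\mathbb R}\sup_{n\le N}\Big(|s|+\frac{1}{|s|}\Big)^N\Big|\frac{d^nf(s)}{ds^n}\Big|<\infty$$ (Schwartz functions vanishing at $0$ faster than any polynomial). $\tilde{\mathcal S}\cap\mathcal H^2_-$ denotes the functions in $\mathcal H^2_-$ whose boundary values on $\mathbb R$ lie in $\tilde{\mathcal S}$. *)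

theory Defs
  imports "HOL-Analysis.Analysis"
begin

definition derivs_of :: "(real \<Rightarrow> complex) \<Rightarrow> (nat \<Rightarrow> real \<Rightarrow> complex) \<Rightarrow> bool" where
  "derivs_of f D \<longleftrightarrow> D 0 = f \<and>
     (\<forall>n x. (D n has_vector_derivative D (Suc n) x) (at x))"

text \<open>The space S-tilde: C-infinity functions with all seminorms
  sup_s sup_(n<=N) (|s| + 1/|s|)^N |f^(n)(s)| finite.
  (At s = 0 the Isabelle value of |s| + 1/|s| is 0; the bound there is vacuous,
  and vanishing at 0 follows from continuity of the derivatives.)\<close>
definition S_tilde :: "(real \<Rightarrow> complex) set" where
  "S_tilde = {f. \<exists>D. derivs_of f D \<and>
     (\<forall>N::nat. \<exists>C::real. \<forall>s::real. \<forall>n\<le>N.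
        (\<bar>s\<bar> + 1 / \<bar>s\<bar>) ^ N * norm (D n s) \<le> C)}"

definition H2_lower :: "(complex \<Rightarrow> complex) set" where
  "H2_lower = {F. F holomorphic_on {z. Im z < 0} \<and>
     (\<forall>y<0. integrable lborel (\<lambda>x. (norm (F (Complex x y)))\<^sup>2)) \<and>
     (\<exists>M. \<forall>y<0. integral\<^sup>L lborel (\<lambda>x. (norm (F (Complex x y)))\<^sup>2) \<le> M)}"

text \<open>A function on the real line belongs to S-tilde intersected with H^2_-
  if it lies in S-tilde and it is the (a.e. pointwise, vertical) boundary value
  of some function in H^2_-.\<close>
definition S_tilde_H2_lower :: "(real \<Rightarrow> complex) set" where
  "S_tilde_H2_lower = {g. g \<in> S_tilde \<and>
     (\<exists>F \<in> H2_lower. AE x in lborel.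
        ((\<lambda>y. F (Complex x y)) \<longlongrightarrow> g x) (at_left 0))}"

text \<open>Square root on the real line with branch -pi <= Arg s < pi:
  for s < 0, Arg s = -pi, so sqrt s = sqrt|s| * exp(-i pi/2) = -i sqrt|s|.\<close>
definition sqrt_br :: "real \<Rightarrow> complex" where
  "sqrt_br s = (if s \<ge> 0 then complex_of_real (sqrt s)
                else - \<i> * complex_of_real (sqrt (- s)))"

end

theory Submission imports Defs "HOL-Complex_Analysis.Complex_Analysis" "HOL-Probability.Sinc_Integral"
begin

lemma pow_exp_bound:
  fixes y c :: real and k :: nat
  assumes "y \<ge> 0" "c > 0"
  shows "y ^ k * exp (- (c * y)) \<le> (real k / c) ^ k"
proof (cases "k = 0")
  case True then show ?thesis using assms by simp
next
  case False
  have "exp (c * y) = exp (c * y / real k) ^ k"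
    using False by (simp add: exp_of_nat_mult[symmetric])
  also have "\<dots> \<ge> (c * y / real k) ^ k"
    using assms by (intro power_mono) (auto intro: order_trans[OF _ exp_ge_add_one_self])
  finally have *: "(c * y / real k) ^ k \<le> exp (c * y)" .
  have kc: "(real k / c) * (c * y / real k) = y" using False assms by simp
  have "y ^ k = (real k / c) ^ k * (c * y / real k) ^ k"
    by (metis kc power_mult_distrib)
  also have "\<dots> \<le> (real k / c) ^ k * exp (c * y)"
    using * assms by (intro mult_left_mono) auto
  finally show ?thesis by (simp add: exp_minus field_simps)
qed

definition FF :: "real \<Rightarrow> complex \<Rightarrow> complex" where
  "FF a z = exp (- (of_real a * (csqrt (\<i> * z) + 1 / csqrt (\<i> * z))))"

definition Om :: "complex set" where "Om = {z. Im z < cmod z / 2}"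

lemma open_Om: "open Om"
  unfolding Om_def by (intro open_Collect_less continuous_intros) auto

lemma Om_nonpos: "z \<in> Om \<Longrightarrow> \<i> * z \<notin> \<real>\<^sub>\<le>\<^sub>0"
proof
  assume z: "z \<in> Om" and "\<i> * z \<in> \<real>\<^sub>\<le>\<^sub>0"
  then obtain t where t: "t \<le> 0" "\<i> * z = of_real t" by (auto elim: nonpos_Reals_cases)
  have "z = - \<i> * (\<i> * z)" by (simp add: mult.assoc[symmetric])
  then have "z = - \<i> * of_real t" using t by simp
  then show False using z t by (simp add: Om_def norm_mult)
qed

lemma Om_nz: "z \<in> Om \<Longrightarrow> z \<noteq> 0" by (auto simp: Om_def)

lemma holo_FF: "FF a holomorphic_on Om"
  unfolding FF_def
  by (intro holomorphic_intros) (auto dest: Om_nonpos Om_nz)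

lemma Re_csqrt_ge:
  assumes "Re u \<ge> - cmod u / 2"
  shows "Re (csqrt u) \<ge> sqrt (cmod u) / 2"
proof -
  have "sqrt (cmod u) / 2 = sqrt (cmod u / 4)" by (simp add: real_sqrt_divide)
  also have "\<dots> \<le> sqrt ((cmod u + Re u) / 2)" using assms by (intro real_sqrt_le_mono) auto
  finally show ?thesis by simp
qed

lemma Re_w_inv: "Re (w + 1 / w) = Re w * (1 + 1 / (cmod w)\<^sup>2)"
proof -
  have "Re (1 / w) = Re w / (cmod w)\<^sup>2" by (simp add: Re_divide cmod_power2)
  then show ?thesis by (simp add: algebra_simps)
qed

lemma norm_FF_eq: "norm (FF a z) = exp (- (a * Re (csqrt (\<i> * z) + 1 / csqrt (\<i> * z))))"
  unfolding FF_def norm_exp_eq_Re by simp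

lemma norm_FF_upper:
  assumes "a \<ge> 0" "z \<noteq> 0" "Im z \<le> cmod z / 2"
  shows "norm (FF a z) \<le> exp (- (a / 2 * (sqrt (cmod z) + 1 / sqrt (cmod z))))"
proof -
  define w where "w = csqrt (\<i> * z)"
  have nw: "cmod w = sqrt (cmod z)" by (simp add: w_def norm_mult)
  have pos: "cmod w > 0" using assms by (simp add: nw)
  have "Re w \<ge> cmod w / 2" unfolding w_def using assms by (intro order_trans[OF _ Re_csqrt_ge]) (auto simp: norm_mult)
  then have "Re (w + 1/w) \<ge> cmod w / 2 * (1 + 1 / (cmod w)\<^sup>2)"
    unfolding Re_w_inv by (intro mult_right_mono) auto
  also have "cmod w / 2 * (1 + 1 / (cmod w)\<^sup>2) = (cmod w + 1 / cmod w) / 2"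
    using pos by (simp add: field_simps power2_eq_square)
  finally have "Re (w + 1/w) \<ge> (cmod w + 1 / cmod w) / 2" .
  then have "a * ((cmod w + 1 / cmod w) / 2) \<le> a * Re (w + 1/w)" using assms by (intro mult_left_mono) auto
  then show ?thesis unfolding norm_FF_eq w_def[symmetric] nw[symmetric]
    by (simp add: field_simps)
qed

lemma norm_FF_lower:
  assumes "a \<ge> 0"
  shows "norm (FF a z) \<ge> exp (- (a * (sqrt (cmod z) + 1 / sqrt (cmod z))))"
proof -
  define w where "w = csqrt (\<i> * z)"
  have nw: "cmod w = sqrt (cmod z)" by (simp add: w_def norm_mult)
  have "Re (w + 1/w) \<le> cmod (w + 1/w)" by (rule complex_Re_le_cmod)
  also have "\<dots> \<le> cmod w + cmod (1/w)" by (rule norm_triangle_ineq)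
  also have "cmod (1/w) = 1 / cmod w" by (simp add: norm_divide)
  finally have "a * Re (w + 1/w) \<le> a * (cmod w + 1 / cmod w)" using assms by (intro mult_left_mono) auto
  then show ?thesis unfolding norm_FF_eq w_def[symmetric] nw[symmetric]
    by simp
qed

lemma cball_Om:
  assumes "s \<noteq> 0"
  shows "cball (complex_of_real s) (\<bar>s\<bar>/4) \<subseteq> Om"
proof
  fix z :: complex assume "z \<in> cball (of_real s) (\<bar>s\<bar>/4)"
  then have d: "cmod (z - of_real s) \<le> \<bar>s\<bar>/4" by (simp add: dist_norm norm_minus_commute)
  have "Im z = Im (z - of_real s)" by simp
  also have "\<dots> \<le> cmod (z - of_real s)" using abs_Im_le_cmod[of "z - of_real s"] by linarith
  finally have "Im z \<le> \<bar>s\<bar>/4" using d by linarith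
  moreover have "cmod (of_real s) \<le> cmod z + cmod (of_real s - z)" by (rule norm_triangle_sub)
  then have "cmod z \<ge> 3 * \<bar>s\<bar> / 4" using d by (simp add: norm_minus_commute)
  ultimately show "z \<in> Om" using assms by (simp add: Om_def)
qed

lemma deriv_bound:
  assumes "a > 0" "s \<noteq> 0"
  shows "norm ((deriv ^^ n) (FF a) (of_real s))
           \<le> fact n * exp (- (a / 4 * (sqrt \<bar>s\<bar> + 1 / sqrt \<bar>s\<bar>))) / (\<bar>s\<bar>/4) ^ n"
proof (rule Cauchy_inequality)
  show "FF a holomorphic_on ball (of_real s) (\<bar>s\<bar>/4)"
    using holo_FF cball_Om[OF assms(2)] ball_subset_cball by (blast intro: holomorphic_on_subset)
  show "continuous_on (cball (of_real s) (\<bar>s\<bar>/4)) (FF a)"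
    using holo_FF cball_Om[OF assms(2)] by (blast intro: holomorphic_on_subset holomorphic_on_imp_continuous_on)
  show "0 < \<bar>s\<bar>/4" using assms by simp
  fix x assume x: "cmod (of_real s - x) = \<bar>s\<bar>/4"
  then have xin: "x \<in> Om" using cball_Om[OF assms(2)] by (auto simp: dist_norm)
  have "cmod (of_real s) \<le> cmod x + cmod (of_real s - x)" by (rule norm_triangle_sub)
  then have lo: "cmod x \<ge> \<bar>s\<bar> / 4" using x by simp
  have "cmod x \<le> cmod (of_real s) + cmod (x - of_real s)" by (rule norm_triangle_sub)
  then have hi: "cmod x \<le> 4 * \<bar>s\<bar>" using x by (simp add: norm_minus_commute)
  have st: "sqrt \<bar>s\<bar> > 0" using assms by simp
  have "sqrt \<bar>s\<bar> / 2 = sqrt (\<bar>s\<bar>/4)" by (simp add: real_sqrt_divide)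
  also have "\<dots> \<le> sqrt (cmod x)" using lo by simp
  finally have 1: "sqrt \<bar>s\<bar> / 2 \<le> sqrt (cmod x)" .
  have "sqrt (cmod x) \<le> sqrt (4 * \<bar>s\<bar>)" using hi by simp
  also have "\<dots> = 2 * sqrt \<bar>s\<bar>" by (simp add: real_sqrt_mult)
  finally have "sqrt (cmod x) \<le> 2 * sqrt \<bar>s\<bar>" .
  moreover have "sqrt (cmod x) > 0" using xin Om_nz by auto
  ultimately have 2: "1 / (2 * sqrt \<bar>s\<bar>) \<le> 1 / sqrt (cmod x)"
    using st by (intro divide_left_mono) auto
  have "a / 4 * (sqrt \<bar>s\<bar> + 1 / sqrt \<bar>s\<bar>) = a / 2 * (sqrt \<bar>s\<bar> / 2 + 1 / (2 * sqrt \<bar>s\<bar>))"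
    by (simp add: field_simps)
  also have "\<dots> \<le> a / 2 * (sqrt (cmod x) + 1 / sqrt (cmod x))"
    using 1 2 assms by (intro mult_left_mono) auto
  finally have "exp (- (a / 2 * (sqrt (cmod x) + 1 / sqrt (cmod x)))) \<le> exp (- (a / 4 * (sqrt \<bar>s\<bar> + 1 / sqrt \<bar>s\<bar>)))"
    by simp
  moreover have "norm (FF a x) \<le> exp (- (a / 2 * (sqrt (cmod x) + 1 / sqrt (cmod x))))"
    using xin assms by (intro norm_FF_upper) (auto simp: Om_def dest: Om_nz)
  ultimately show "norm (FF a x) \<le> exp (- (a / 4 * (sqrt \<bar>s\<bar> + 1 / sqrt \<bar>s\<bar>)))" by linarith
qed

definition DD :: "real \<Rightarrow> nat \<Rightarrow> real \<Rightarrow> complex" where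
  "DD a n s = (if s = 0 then 0 else (deriv ^^ n) (FF a) (of_real s))"

lemma DD_bound:
  assumes "a > 0"
  shows "\<exists>C. \<forall>s. (\<bar>s\<bar> + 1 / \<bar>s\<bar>) ^ N * norm (DD a n s) \<le> C"
proof -
  define k where "k = 2 * N + 2 * n"
  define K where "K = fact n * 4 ^ n * (real k / (a / 4)) ^ k"
  have K0: "K \<ge> 0" unfolding K_def using assms by simp
  have "(\<bar>s\<bar> + 1 / \<bar>s\<bar>) ^ N * norm (DD a n s) \<le> K" for s
  proof (cases "s = 0")
    case True then show ?thesis using K0 by (simp add: DD_def)
  next
    case False
    define t where "t = \<bar>s\<bar>"
    define r where "r = sqrt t"
    define y where "y = r + 1 / r"
    have t0: "t > 0" using False by (simp add: t_def)
    have r0: "r > 0" using t0 by (simp add: r_def)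
    have rt: "r^2 = t" using t0 by (simp add: r_def)
    have y0: "y \<ge> 0" using r0 by (simp add: y_def)
    have y2: "y^2 = t + 2 + 1 / t" using r0 rt t0 by (simp add: y_def power2_eq_square field_simps)
    have A: "t + 1 / t \<le> y^2" using y2 by simp
    have B: "1 / t \<le> y^2" using y2 t0 by simp
    have E: "norm (DD a n s) \<le> fact n * exp (- (a / 4 * y)) / (t/4) ^ n"
      using deriv_bound[OF assms False, of n] False by (simp add: DD_def t_def r_def y_def)
    have "(t + 1 / t) ^ N * norm (DD a n s) \<le> (y^2) ^ N * (fact n * exp (- (a / 4 * y)) / (t/4) ^ n)"
      using A E t0 by (intro mult_mono power_mono) auto
    also have "fact n * exp (- (a / 4 * y)) / (t/4) ^ n = fact n * 4 ^ n * (1 / t) ^ n * exp (- (a / 4 * y))"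
      by (simp add: field_simps power_divide)
    also have "(y^2) ^ N * (fact n * 4 ^ n * (1 / t) ^ n * exp (- (a / 4 * y)))
        \<le> (y^2) ^ N * (fact n * 4 ^ n * (y^2) ^ n * exp (- (a / 4 * y)))"
      using B t0 by (intro mult_left_mono mult_right_mono power_mono) auto
    also have "\<dots> = fact n * 4 ^ n * (y ^ k * exp (- (a / 4 * y)))"
      proof -
        have yk: "y ^ k = (y^2)^N * (y^2)^n" by (simp add: k_def power_add power_mult)
        show ?thesis by (simp add: yk algebra_simps)
      qed
    also have "\<dots> \<le> fact n * 4 ^ n * (real k / (a / 4)) ^ k"
      using pow_exp_bound[OF y0, of "a/4" k] assms by (intro mult_left_mono) auto
    finally show ?thesis by (simp add: t_def K_def)
  qed
  then show ?thesis by blast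
qed

lemma DD_small:
  assumes "a > 0"
  shows "\<exists>C. \<forall>s. norm (DD a n s) \<le> C * s^2"
proof -
  obtain C where C: "\<And>s. (\<bar>s\<bar> + 1 / \<bar>s\<bar>) ^ 2 * norm (DD a n s) \<le> C"
    using DD_bound[OF assms, of 2 n] by blast
  have "norm (DD a n s) \<le> C * s^2" for s
  proof (cases "s = 0")
    case True then show ?thesis by (simp add: DD_def)
  next
    case False
    have "(1 / \<bar>s\<bar>) ^ 2 \<le> (\<bar>s\<bar> + 1 / \<bar>s\<bar>) ^ 2"
      by (intro power_mono) auto
    then have "1 / s^2 \<le> (\<bar>s\<bar> + 1 / \<bar>s\<bar>) ^ 2"
      by (simp add: power_divide)
    then have "1 / s^2 * norm (DD a n s) \<le> C"
      using C[of s] by (meson mult_right_mono norm_ge_zero order_trans)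
    then show ?thesis using False by (simp add: field_simps)
  qed
  then show ?thesis by blast
qed

lemma DD_deriv:
  assumes "a > 0"
  shows "(DD a n has_vector_derivative DD a (Suc n) x) (at x)"
proof (cases "x = 0")
  case False
  have hol: "(deriv ^^ n) (FF a) holomorphic_on Om"
    using holo_FF open_Om by (rule holomorphic_higher_deriv)
  have xin: "complex_of_real x \<in> Om" using False by (simp add: Om_def)
  have "((deriv ^^ n) (FF a) has_field_derivative deriv ((deriv ^^ n) (FF a)) (of_real x)) (at (of_real x))"
    using hol open_Om xin by (rule holomorphic_derivI)
  then have "((\<lambda>y. (deriv ^^ n) (FF a) (of_real y)) has_vector_derivative DD a (Suc n) x) (at x)"
    using False by (simp add: DD_def has_vector_derivative_real_field)
  then show ?thesis
    by (rule has_vector_derivative_transform_within_open[where S="-{0}"]) (auto simp: False DD_def)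
next
  case True
  obtain C where C: "\<And>s. norm (DD a n s) \<le> C * s^2" using DD_small[OF assms] by blast
  have "((\<lambda>y. (DD a n y - DD a n 0 - y *\<^sub>R 0) /\<^sub>R norm (y - 0)) \<longlongrightarrow> 0) (at 0)"
  proof (rule Lim_null_comparison)
    show "\<forall>\<^sub>F y in at 0. norm ((DD a n y - DD a n 0 - y *\<^sub>R 0) /\<^sub>R norm (y - 0)) \<le> C * \<bar>y\<bar>"
    proof (rule always_eventually, rule allI)
      fix y :: real
      show "norm ((DD a n y - DD a n 0 - y *\<^sub>R 0) /\<^sub>R norm (y - 0)) \<le> C * \<bar>y\<bar>"
      proof (cases "y = 0")
        case True then show ?thesis by (simp add: DD_def)
      next
        case False
        have "norm (DD a n y) / \<bar>y\<bar> \<le> C * y^2 / \<bar>y\<bar>"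
          using C[of y] False by (intro divide_right_mono) auto
        also have "C * y^2 / \<bar>y\<bar> = C * \<bar>y\<bar>" using False by (simp add: power2_eq_square field_simps abs_mult_self_eq)
        finally have "norm (DD a n y) / \<bar>y\<bar> \<le> C * \<bar>y\<bar>" .
        moreover have "DD a n 0 = 0" by (simp add: DD_def)
        ultimately show ?thesis by (simp add: divide_inverse mult.commute)
      qed
    qed
    show "((\<lambda>y. C * \<bar>y\<bar>) \<longlongrightarrow> 0) (at (0::real))"
      by (rule tendsto_eq_intros refl | simp)+
  qed
  then have "(DD a n has_derivative (\<lambda>y. y *\<^sub>R 0)) (at 0)"
    unfolding has_derivative_at_within by (simp add: bounded_linear_scaleR_left)
  then show ?thesis using True by (simp add: has_vector_derivative_def DD_def)
qed

lemma derivs_DD: "a > 0 \<Longrightarrow> derivs_of (DD a 0) (DD a)"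
  unfolding derivs_of_def using DD_deriv by blast

lemma DD_S_tilde:
  assumes a: "a > 0"
  shows "DD a 0 \<in> S_tilde"
proof -
  have "\<exists>C. \<forall>s. \<forall>n\<le>N. (\<bar>s\<bar> + 1 / \<bar>s\<bar>) ^ N * norm (DD a n s) \<le> C" for N :: nat
  proof -
    have "\<forall>n. \<exists>C. \<forall>s. (\<bar>s\<bar> + 1 / \<bar>s\<bar>) ^ N * norm (DD a n s) \<le> C"
      using DD_bound[OF a] by blast
    then obtain Cf where Cf: "\<And>n s. (\<bar>s\<bar> + 1 / \<bar>s\<bar>) ^ N * norm (DD a n s) \<le> Cf n"
      by metis
    have Cf0: "Cf n \<ge> 0" for n using Cf[where s=0 and n=n] by (simp add: DD_def)
    have "(\<bar>s\<bar> + 1 / \<bar>s\<bar>) ^ N * norm (DD a n s) \<le> (\<Sum>m\<le>N. Cf m)" if "n \<le> N" for s n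
    proof -
      have "Cf n \<le> (\<Sum>m\<le>N. Cf m)"
        using that Cf0 by (intro member_le_sum) auto
      then show ?thesis using Cf[where s=s and n=n] by linarith
    qed
    then show ?thesis by blast
  qed
  moreover have "derivs_of (DD a 0) (DD a)" using a by (rule derivs_DD)
  ultimately show ?thesis unfolding S_tilde_def by blast
qed

lemma Complex_Om: "y < 0 \<Longrightarrow> Complex x y \<in> Om"
proof -
  assume y: "y < 0"
  have i: "Im (Complex x y) = y" by simp
  have n: "0 \<le> cmod (Complex x y)" by (rule norm_ge_zero)
  from i n y have "Im (Complex x y) < cmod (Complex x y) / 2" by linarith
  then show ?thesis unfolding Om_def mem_Collect_eq .
qed

lemma FF_sq_bound:
  assumes "a > 0" "z \<in> Om"
  shows "(norm (FF a z))\<^sup>2 \<le> (1 + (4 / a) ^ 4) * inverse (1 + (Re z)\<^sup>2)"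
proof -
  define r where "r = sqrt (cmod z)"
  have r0: "r > 0" using assms Om_nz by (auto simp: r_def)
  have "norm (FF a z) \<le> exp (- (a / 2 * (r + 1 / r)))"
    unfolding r_def using assms by (intro norm_FF_upper) (auto simp: Om_def dest: Om_nz)
  also have "\<dots> \<le> exp (- (a / 2 * r))" using r0 assms by (simp add: field_simps)
  finally have "(norm (FF a z))\<^sup>2 \<le> (exp (- (a / 2 * r)))\<^sup>2" by (intro power_mono) auto
  also have "(exp (- (a / 2 * r)))\<^sup>2 = exp (- (a * r))"
    by (simp add: power2_eq_square exp_add[symmetric])
  finally have n2: "(norm (FF a z))\<^sup>2 \<le> exp (- (a * r))" .
  have "\<bar>Re z\<bar>\<^sup>2 \<le> (cmod z)\<^sup>2" by (intro power_mono abs_Re_le_cmod) auto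
  then have "(Re z)\<^sup>2 \<le> (cmod z)\<^sup>2" by simp
  also have "(cmod z)\<^sup>2 = (r\<^sup>2)\<^sup>2" by (simp add: r_def)
  also have "\<dots> = r ^ 4" by (simp add: power_mult[symmetric])
  finally have re: "(Re z)\<^sup>2 \<le> r ^ 4" .
  have "(1 + (Re z)\<^sup>2) * exp (- (a * r)) \<le> (1 + r ^ 4) * exp (- (a * r))"
    using re by (intro mult_right_mono) auto
  also have "\<dots> = exp (- (a * r)) + r ^ 4 * exp (- (a * r))" by (simp add: algebra_simps)
  also have "\<dots> \<le> 1 + (4 / a) ^ 4"
  proof (intro add_mono)
    show "exp (- (a * r)) \<le> 1" using assms r0 by simp
    show "r ^ 4 * exp (- (a * r)) \<le> (4 / a) ^ 4"
      using pow_exp_bound[of r a 4] r0 assms by simp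
  qed
  finally have "exp (- (a * r)) \<le> (1 + (4 / a) ^ 4) * inverse (1 + (Re z)\<^sup>2)"
    by (simp add: field_simps add_pos_nonneg)
  with n2 show ?thesis by linarith
qed

lemma integrable_inv_sq: "integrable lborel (\<lambda>x::real. inverse (1 + x\<^sup>2))"
proof -
  have "einterval (-\<infinity>) \<infinity> = (UNIV :: real set)" by (auto simp: einterval_iff)
  then show ?thesis using integrable_inverse_1_plus_square by (simp add: set_integrable_def)
qed

lemma cont_line: "y < 0 \<Longrightarrow> continuous_on UNIV (\<lambda>x. FF a (Complex x y))"
proof -
  assume y: "y < 0"
  have eq: "(\<lambda>x. Complex x y) = (\<lambda>x. of_real x + \<i> * of_real y)" by (auto simp: Complex_eq)
  have c: "continuous_on Om (FF a)" using holo_FF by (rule holomorphic_on_imp_continuous_on)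
  have cc: "continuous_on UNIV (\<lambda>x. of_real x + \<i> * of_real y)" by (intro continuous_intros)
  have "(\<lambda>x. Complex x y) ` UNIV \<subseteq> Om"
    using Complex_Om[OF y] by blast
  then have sub: "(\<lambda>x. of_real x + \<i> * of_real y) ` UNIV \<subseteq> Om" by (simp only: eq)
  have eq2: "(\<lambda>x. FF a (Complex x y)) = (\<lambda>x. FF a (of_real x + \<i> * of_real y))" by (simp add: Complex_eq)
  show ?thesis unfolding eq2 by (rule continuous_on_compose2[OF c cc sub])
qed

lemma FF_H2: assumes "a > 0" shows "FF a \<in> H2_lower"
proof -
  define K where "K = 1 + (4 / a) ^ 4"
  have intK: "integrable lborel (\<lambda>x::real. K * inverse (1 + x\<^sup>2))"
    using integrable_inv_sq by (rule integrable_mult_right)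
  have bnd: "(norm (FF a (Complex x y)))\<^sup>2 \<le> K * inverse (1 + x\<^sup>2)" if "y < 0" for x y
    using FF_sq_bound[OF assms Complex_Om[OF that, of x]] by (simp add: K_def)
  have int: "integrable lborel (\<lambda>x. (norm (FF a (Complex x y)))\<^sup>2)" if y: "y < 0" for y
  proof (rule Bochner_Integration.integrable_bound[OF intK])
    have "continuous_on UNIV (\<lambda>x. (norm (FF a (Complex x y)))\<^sup>2)"
      using cont_line[OF y] by (intro continuous_intros)
    then show "(\<lambda>x. (norm (FF a (Complex x y)))\<^sup>2) \<in> borel_measurable lborel"
      by (simp add: borel_measurable_continuous_onI)
    show "AE x in lborel. norm ((norm (FF a (Complex x y)))\<^sup>2) \<le> norm (K * inverse (1 + x\<^sup>2))"
      using bnd[OF y] by (intro AE_I2) (auto simp: K_def)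
  qed
  have "integral\<^sup>L lborel (\<lambda>x. (norm (FF a (Complex x y)))\<^sup>2) \<le> integral\<^sup>L lborel (\<lambda>x::real. K * inverse (1 + x\<^sup>2))"
    if y: "y < 0" for y
    using int[OF y] intK bnd[OF y] by (intro integral_mono) auto
  moreover have "FF a holomorphic_on {z. Im z < 0}"
    using holo_FF by (rule holomorphic_on_subset) (auto simp: Om_def intro: order_less_le_trans[OF _ norm_ge_zero])
  ultimately show ?thesis unfolding H2_lower_def using int by blast
qed

lemma FF_boundary:
  assumes "a > 0"
  shows "AE x in lborel. ((\<lambda>y. FF a (Complex x y)) \<longlongrightarrow> DD a 0 x) (at_left 0)"
  using AE_lborel_singleton[of "0::real"]
proof (rule AE_mp, intro AE_I2 impI)
  fix x :: real assume x: "x \<noteq> 0"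
  have xin: "complex_of_real x \<in> Om" using x by (simp add: Om_def)
  have "isCont (FF a) (of_real x)"
    using holo_FF open_Om xin by (meson continuous_on_eq_continuous_at holomorphic_on_imp_continuous_on)
  moreover have "((\<lambda>y. Complex x y) \<longlongrightarrow> of_real x) (at_left 0)"
  proof -
    have "((\<lambda>y. of_real x + \<i> * of_real y) \<longlongrightarrow> of_real x + \<i> * of_real 0) (at_left (0::real))"
      by (intro tendsto_intros)
    then show ?thesis by (simp add: Complex_eq)
  qed
  ultimately have "((\<lambda>y. FF a (Complex x y)) \<longlongrightarrow> FF a (of_real x)) (at_left 0)"
    by (rule isCont_tendsto_compose)
  then show "((\<lambda>y. FF a (Complex x y)) \<longlongrightarrow> DD a 0 x) (at_left 0)" using x by (simp add: DD_def)
qed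

theorem proposition1:
  fixes b :: real
  assumes "b > 0"
  shows "\<exists>g \<in> S_tilde_H2_lower.
           (\<lambda>s. exp (\<i> * sqrt_br s * complex_of_real b) * g s) \<notin> S_tilde_H2_lower"
proof
  define a where "a = b / 2"
  have a: "a > 0" using assms by (simp add: a_def)
  show "DD a 0 \<in> S_tilde_H2_lower"
    unfolding S_tilde_H2_lower_def using DD_S_tilde[OF a] FF_H2[OF a] FF_boundary[OF a] by blast
  show "(\<lambda>s. exp (\<i> * sqrt_br s * complex_of_real b) * DD a 0 s) \<notin> S_tilde_H2_lower"
  proof
    define f where "f = (\<lambda>s. exp (\<i> * sqrt_br s * complex_of_real b) * DD a 0 s)"
    assume "(\<lambda>s. exp (\<i> * sqrt_br s * complex_of_real b) * DD a 0 s) \<in> S_tilde_H2_lower"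
    then have "f \<in> S_tilde" unfolding f_def S_tilde_H2_lower_def by blast
    then obtain D where D: "derivs_of f D"
      and B: "\<forall>N::nat. \<exists>C::real. \<forall>s::real. \<forall>n\<le>N. (\<bar>s\<bar> + 1 / \<bar>s\<bar>) ^ N * norm (D n s) \<le> C"
      unfolding S_tilde_def by blast
    from B obtain C where C: "\<And>s. norm (f s) \<le> C"
      using D unfolding derivs_of_def by fastforce
    define R where "R = 1 + 2 * (\<bar>C\<bar> + 1) / b"
    have R1: "R \<ge> 1" using assms by (simp add: R_def)
    define s where "s = - (R\<^sup>2)"
    have s0: "s < 0" using R1 by (simp add: s_def)
    have sq: "sqrt (- s) = R" using R1 by (simp add: s_def)
    have cs: "sqrt (cmod (complex_of_real s)) = R" using sq s0 by simp
    have e1: "\<i> * sqrt_br s * complex_of_real b = complex_of_real (R * b)"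
      using s0 sq by (simp add: sqrt_br_def)
    have "norm (f s) = exp (R * b) * norm (FF a (of_real s))"
      using s0 by (simp add: f_def e1 DD_def norm_mult)
    also have "\<dots> \<ge> exp (R * b) * exp (- (a * (R + 1 / R)))"
      using norm_FF_lower[of a "of_real s"] a cs by (intro mult_left_mono) auto
    finally have "norm (f s) \<ge> exp (R * b) * exp (- (a * (R + 1 / R)))" .
    then have "norm (f s) \<ge> exp (R * b - a * (R + 1 / R))" by (simp add: mult_exp_exp)
    moreover have "R * b - a * (R + 1 / R) \<ge> b / 2 * (R - 1)"
    proof -
      have "1 / R \<le> 1" using R1 by simp
      then have h: "b / 2 * (1 / R) \<le> b / 2 * 1" using assms by (intro mult_left_mono) auto
      have e1: "R * b - a * (R + 1 / R) = b / 2 * R - b / 2 * (1 / R)" by (simp add: a_def algebra_simps)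
      have e2: "b / 2 * (R - 1) = b / 2 * R - b / 2 * 1" by (rule right_diff_distrib)
      show ?thesis unfolding e1 e2 using h by linarith
    qed
    moreover have "b / 2 * (R - 1) = \<bar>C\<bar> + 1" using assms by (simp add: R_def field_simps)
    ultimately have "norm (f s) \<ge> exp (\<bar>C\<bar> + 1)" by (smt (verit) exp_le_cancel_iff)
    moreover have "exp (\<bar>C\<bar> + 1) \<ge> 1 + (\<bar>C\<bar> + 1)" by (rule exp_ge_add_one_self)
    ultimately show False using C[of s] by linarith
  qed
qed

end
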